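(* Let $G$ be a 3-connected graph other than $K_{3,3}$, let $N$ be a maximal 3-chop of $G$, and let $\sigma$ be a splitting star of $N$ with torso $X$. If $X$ has at least five vertices, then $X$ is internally 4-connected.
   Context: All graphs are finite and simple. A separation of $G$ is an unordered pair $\{A,B\}$ with $A\cup B=V(G)$ and no edge between $A\setminus B$ and $B\setminus A$; its order is $|A\cap B|$; a 3-separation has order exactly 3; it is proper if $A\setminus B\ne\emptyset\ne B\setminus A$. For oriented separations, $(A,B)\le(C,D)$ iff $A\subseteq C$ and $B\supseteq D$. Two separations are nested if some orientations of them are $\le$-comparable; a nested set has pairwise nested elements. A star is a set $\sigma$ of oriented separations with $(A,B)\le(D,C)$ for all distinct $(A,B),(C,D)\in\sigma$; its bag is $\bigcap_{(A,B)\in\sigma}B$ ($=V(G)$ if $\sigma$ is empty); its torso is obtained from the subgraph induced on the bag by making each separator $A\cap B$, $(A,B)\in\sigma$, a clique. A splitting star of a set $S$ of separations is a star $\sigma$ of orientations of elements of $S$ such that every $\{C,D\}\in S$ has an orientation $\le$ some element of $\sigma$. A proper 3-separation $\{A,B\}$ of a 3-connected graph is claw-free if both $G[A]$ and $G[B]$ contain a cycle. A set of proper 3-separations is claw-freeable if it can be enumerated $s_0,\dots,s_n$ so that each $s_i$ is claw-free or shares at least two separator vertices with some $s_j$, $j<i$. A 3-chop of $G$ is a claw-freeable nested set of proper 3-separations of $G$; it is maximal if it is not a proper subset of another 3-chop of $G$. A graph is internally 4-connected if it is 3-connected, has more than four vertices, and every proper 3-separation $\{A,B\}$ has independent separator and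 satisfies $|A\setminus B|=1$ or $|B\setminus A|=1$. *)

theory Defs
  imports Main
begin

definition graph :: "'a set \<Rightarrow> ('a \<Rightarrow> 'a \<Rightarrow> bool) \<Rightarrow> bool" where
  "graph V E \<longleftrightarrow> finite V \<and> (\<forall>u v. E u v \<longrightarrow> u \<in> V \<and> v \<in> V \<and> u \<noteq> v \<and> E v u)"

definition connected_on :: "('a \<Rightarrow> 'a \<Rightarrow> bool) \<Rightarrow> 'a set \<Rightarrow> bool" where
  "connected_on E S \<longleftrightarrow> S \<noteq> {} \<and>
     (\<forall>u\<in>S. \<forall>v\<in>S. (\<lambda>x y. x \<in> S \<and> y \<in> S \<and> E x y)\<^sup>*\<^sup>* u v)"

definition k_connected :: "nat \<Rightarrow> 'a set \<Rightarrow> ('a \<Rightarrow> 'a \<Rightarrow> bool) \<Rightarrow> bool" where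
  "k_connected k V E \<longleftrightarrow> graph V E \<and> card V > k \<and>
     (\<forall>X. X \<subseteq> V \<and> card X < k \<longrightarrow> connected_on E (V - X))"

definition is_K33 :: "'a set \<Rightarrow> ('a \<Rightarrow> 'a \<Rightarrow> bool) \<Rightarrow> bool" where
  "is_K33 V E \<longleftrightarrow> (\<exists>X Y. X \<inter> Y = {} \<and> X \<union> Y = V \<and> card X = 3 \<and> card Y = 3 \<and>
     (\<forall>u\<in>V. \<forall>v\<in>V. E u v \<longleftrightarrow> (u \<in> X \<and> v \<in> Y \<or> u \<in> Y \<and> v \<in> X)))"

definition oriented_sep :: "'a set \<Rightarrow> ('a \<Rightarrow> 'a \<Rightarrow> bool) \<Rightarrow> 'a set \<times> 'a set \<Rightarrow> bool" where
  "oriented_sep V E AB \<longleftrightarrow> (case AB of (A, B) \<Rightarrow>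
     A \<union> B = V \<and> (\<forall>u\<in>A - B. \<forall>v\<in>B - A. \<not> E u v))"

definition separation :: "'a set \<Rightarrow> ('a \<Rightarrow> 'a \<Rightarrow> bool) \<Rightarrow> 'a set set \<Rightarrow> bool" where
  "separation V E s \<longleftrightarrow> (\<exists>A B. s = {A, B} \<and> oriented_sep V E (A, B))"

definition orientation_of :: "'a set \<times> 'a set \<Rightarrow> 'a set set \<Rightarrow> bool" where
  "orientation_of AB s \<longleftrightarrow> s = {fst AB, snd AB}"

definition separator :: "'a set set \<Rightarrow> 'a set" where
  "separator s = \<Inter> s"

definition proper_3sep :: "'a set \<Rightarrow> ('a \<Rightarrow> 'a \<Rightarrow> bool) \<Rightarrow> 'a set set \<Rightarrow> bool" where
  "proper_3sep V E s \<longleftrightarrow> (\<exists>A B. s = {A, B} \<and> oriented_sep V E (A, B) \<and>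
      card (A \<inter> B) = 3 \<and> A - B \<noteq> {} \<and> B - A \<noteq> {})"

definition sep_le :: "'a set \<times> 'a set \<Rightarrow> 'a set \<times> 'a set \<Rightarrow> bool" where
  "sep_le AB CD \<longleftrightarrow> fst AB \<subseteq> fst CD \<and> snd CD \<subseteq> snd AB"

definition nested :: "'a set set \<Rightarrow> 'a set set \<Rightarrow> bool" where
  "nested s t \<longleftrightarrow> (\<exists>AB CD. orientation_of AB s \<and> orientation_of CD t \<and> sep_le AB CD)"

definition nested_set :: "'a set set set \<Rightarrow> bool" where
  "nested_set N \<longleftrightarrow> (\<forall>s\<in>N. \<forall>t\<in>N. nested s t)"

definition has_cycle_in :: "('a \<Rightarrow> 'a \<Rightarrow> bool) \<Rightarrow> 'a set \<Rightarrow> bool" where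
  "has_cycle_in E S \<longleftrightarrow> (\<exists>xs. distinct xs \<and> length xs \<ge> 3 \<and> set xs \<subseteq> S \<and>
     (\<forall>i. Suc i < length xs \<longrightarrow> E (xs ! i) (xs ! Suc i)) \<and> E (last xs) (hd xs))"

definition claw_free_sep :: "'a set \<Rightarrow> ('a \<Rightarrow> 'a \<Rightarrow> bool) \<Rightarrow> 'a set set \<Rightarrow> bool" where
  "claw_free_sep V E s \<longleftrightarrow> proper_3sep V E s \<and>
     (\<exists>A B. s = {A, B} \<and> has_cycle_in E A \<and> has_cycle_in E B)"

definition claw_freeable :: "'a set \<Rightarrow> ('a \<Rightarrow> 'a \<Rightarrow> bool) \<Rightarrow> 'a set set set \<Rightarrow> bool" where
  "claw_freeable V E S \<longleftrightarrow> (\<forall>s\<in>S. proper_3sep V E s) \<and>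
     (\<exists>xs. distinct xs \<and> set xs = S \<and>
        (\<forall>i < length xs. claw_free_sep V E (xs ! i) \<or>
           (\<exists>j < i. card (separator (xs ! i) \<inter> separator (xs ! j)) \<ge> 2)))"

definition three_chop :: "'a set \<Rightarrow> ('a \<Rightarrow> 'a \<Rightarrow> bool) \<Rightarrow> 'a set set set \<Rightarrow> bool" where
  "three_chop V E N \<longleftrightarrow> claw_freeable V E N \<and> nested_set N"

definition maximal_three_chop :: "'a set \<Rightarrow> ('a \<Rightarrow> 'a \<Rightarrow> bool) \<Rightarrow> 'a set set set \<Rightarrow> bool" where
  "maximal_three_chop V E N \<longleftrightarrow> three_chop V E N \<and> \<not> (\<exists>N'. three_chop V E N' \<and> N \<subset> N')"

definition is_star :: "('a set \<times> 'a set) set \<Rightarrow> bool" where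
  "is_star \<sigma> \<longleftrightarrow> (\<forall>AB\<in>\<sigma>. \<forall>CD\<in>\<sigma>. AB \<noteq> CD \<longrightarrow> sep_le AB (snd CD, fst CD))"

definition splitting_star :: "'a set set set \<Rightarrow> ('a set \<times> 'a set) set \<Rightarrow> bool" where
  "splitting_star S \<sigma> \<longleftrightarrow> is_star \<sigma> \<and> (\<forall>AB\<in>\<sigma>. \<exists>s\<in>S. orientation_of AB s) \<and>
     (\<forall>s\<in>S. \<exists>CD. orientation_of CD s \<and> (\<exists>AB\<in>\<sigma>. sep_le CD AB))"

definition bag :: "'a set \<Rightarrow> ('a set \<times> 'a set) set \<Rightarrow> 'a set" where
  "bag V \<sigma> = V \<inter> (\<Inter>AB\<in>\<sigma>. snd AB)"

definition torso_edges :: "'a set \<Rightarrow> ('a \<Rightarrow> 'a \<Rightarrow> bool) \<Rightarrow> ('a set \<times> 'a set) set \<Rightarrow> 'a \<Rightarrow> 'a \<Rightarrow> bool" where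
  "torso_edges V E \<sigma> u v \<longleftrightarrow> u \<in> bag V \<sigma> \<and> v \<in> bag V \<sigma> \<and> u \<noteq> v \<and>
     (E u v \<or> (\<exists>AB\<in>\<sigma>. u \<in> fst AB \<inter> snd AB \<and> v \<in> fst AB \<inter> snd AB))"

definition internally_4_connected :: "'a set \<Rightarrow> ('a \<Rightarrow> 'a \<Rightarrow> bool) \<Rightarrow> bool" where
  "internally_4_connected V E \<longleftrightarrow> k_connected 3 V E \<and> card V > 4 \<and>
     (\<forall>A B. proper_3sep V E {A, B} \<and> oriented_sep V E (A, B) \<longrightarrow>
        (\<forall>u\<in>A \<inter> B. \<forall>v\<in>A \<inter> B. \<not> E u v) \<and> (card (A - B) = 1 \<or> card (B - A) = 1))"

end

theory Submission
  imports Defs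
begin

definition deg :: "('a \<Rightarrow> 'a \<Rightarrow> bool) \<Rightarrow> 'a set \<Rightarrow> 'a \<Rightarrow> nat" where
  "deg E S v = card {u\<in>S. E v u}"

definition pth :: "('a \<Rightarrow> 'a \<Rightarrow> bool) \<Rightarrow> 'a set \<Rightarrow> 'a list \<Rightarrow> bool" where
  "pth E S xs \<longleftrightarrow> xs \<noteq> [] \<and> distinct xs \<and> set xs \<subseteq> S \<and>
     (\<forall>i. Suc i < length xs \<longrightarrow> E (xs ! i) (xs ! Suc i))"

lemma cycle_mindeg2:
  assumes sym: "\<And>u v. E u v \<Longrightarrow> E v u" and irr: "\<And>u. \<not> E u u"
    and fin: "finite S" and ne: "S \<noteq> {}" and md: "\<And>v. v \<in> S \<Longrightarrow> 2 \<le> deg E S v"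
  shows "has_cycle_in E S"
proof -
  obtain v where v: "v \<in> S" using ne by blast
  have p0: "pth E S [v]" using v by (simp add: pth_def)
  have bnd: "\<forall>n. (\<exists>xs. pth E S xs \<and> length xs = n) \<longrightarrow> n \<le> card S"
  proof (intro allI impI)
    fix n assume "\<exists>xs. pth E S xs \<and> length xs = n"
    then obtain xs where "pth E S xs" "length xs = n" by blast
    then have "distinct xs" "set xs \<subseteq> S" "length xs = n" by (auto simp: pth_def)
    then have "card (set xs) = n" by (simp add: distinct_card)
    moreover have "card (set xs) \<le> card S" using fin \<open>set xs \<subseteq> S\<close> by (rule card_mono)
    ultimately show "n \<le> card S" by simp
  qed
  have p1: "\<exists>xs. pth E S xs \<and> length xs = 1" using p0 by (intro exI[of _ "[v]"]) simp
  have "\<exists>n. (\<exists>xs. pth E S xs \<and> length xs = n) \<and> (\<forall>m. (\<exists>xs. pth E S xs \<and> length xs = m) \<longrightarrow> m \<le> n)"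
    by (rule Nat.ex_has_greatest_nat[of "\<lambda>n. \<exists>xs. pth E S xs \<and> length xs = n" 1 "card S", OF p1 bnd])
  then obtain n where n: "\<exists>xs. pth E S xs \<and> length xs = n"
    and nmax: "\<forall>m. (\<exists>xs. pth E S xs \<and> length xs = m) \<longrightarrow> m \<le> n"
    by blast
  obtain xs where xs: "pth E S xs" "length xs = n" using n by blast
  define x where "x = xs ! 0"
  have xne: "xs \<noteq> []" and xd: "distinct xs" and xS: "set xs \<subseteq> S"
    and xE: "\<And>i. Suc i < length xs \<Longrightarrow> E (xs ! i) (xs ! Suc i)"
    using xs(1) by (auto simp: pth_def)
  have xin: "x \<in> S" using xne xS x_def by (simp add: subset_iff)
  have nsub: "{u\<in>S. E x u} \<subseteq> set xs"
  proof
    fix u assume u: "u \<in> {u\<in>S. E x u}"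
    show "u \<in> set xs"
    proof (rule ccontr)
      assume nu: "u \<notin> set xs"
      have "pth E S (u # xs)"
        unfolding pth_def
      proof (intro conjI allI impI)
        show "distinct (u # xs)" using nu xd by simp
        show "set (u # xs) \<subseteq> S" using u xS by auto
        fix i assume "Suc i < length (u # xs)"
        then show "E ((u # xs) ! i) ((u # xs) ! Suc i)"
        proof (cases i)
          case 0
          then show ?thesis using u sym x_def by simp
        next
          case (Suc k)
          then have "Suc k < length xs" using \<open>Suc i < length (u # xs)\<close> by simp
          then show ?thesis using xE Suc by simp
        qed
      qed simp
      then have "Suc n \<le> n" using nmax xs(2) by (metis length_Cons)
      then show False by simp
    qed
  qed
  have "\<exists>u\<in>{u\<in>S. E x u}. u \<noteq> xs ! 1"
  proof (rule ccontr)
    assume "\<not> ?thesis"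
    then have "{u\<in>S. E x u} \<subseteq> {xs ! 1}" by auto
    then have "card {u\<in>S. E x u} \<le> card {xs ! 1}" by (intro card_mono) auto
    then have "card {u\<in>S. E x u} \<le> 1" by simp
    with md[OF xin] show False by (simp add: deg_def)
  qed
  then obtain u where u: "u \<in> S" "E x u" "u \<noteq> xs ! 1" by blast
  have "u \<in> set xs" using nsub u by blast
  then obtain j where j: "j < length xs" "xs ! j = u" by (auto simp: in_set_conv_nth)
  have "j \<noteq> 0"
  proof
    assume "j = 0"
    then have "E x x" using j u x_def by simp
    then show False using irr by blast
  qed
  have "j \<noteq> 1" using j u by auto
  define ys where "ys = take (Suc j) xs"
  have ylen: "length ys = Suc j" using j ys_def by simp
  show ?thesis
    unfolding has_cycle_in_def
  proof (intro exI[of _ ys] conjI allI impI)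
    show "distinct ys" using xd ys_def by simp
    show "3 \<le> length ys" using ylen \<open>j \<noteq> 0\<close> \<open>j \<noteq> 1\<close> by simp
    show "set ys \<subseteq> S" using xS ys_def by (meson set_take_subset subset_trans)
    fix i assume "Suc i < length ys"
    then show "E (ys ! i) (ys ! Suc i)" using xE ylen j ys_def by simp
  next
    have "ys \<noteq> []" using ylen by auto
    then have "last ys = ys ! j" using ylen by (simp add: last_conv_nth)
    also have "\<dots> = xs ! j" using ys_def by simp
    finally have "last ys = u" using j by simp
    moreover have "hd ys = x" using ys_def x_def xne by (simp add: hd_conv_nth)
    ultimately show "E (last ys) (hd ys)" using u sym by simp
  qed
qed

lemma has_cycle_mono: "has_cycle_in E S \<Longrightarrow> S \<subseteq> T \<Longrightarrow> has_cycle_in E T"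
  unfolding has_cycle_in_def by blast

lemma forest_degsum:
  assumes sym: "\<And>u v. E u v \<Longrightarrow> E v u" and irr: "\<And>u. \<not> E u u"
  shows "finite S \<Longrightarrow> S \<noteq> {} \<Longrightarrow> \<not> has_cycle_in E S \<Longrightarrow> (\<Sum>v\<in>S. deg E S v) \<le> 2 * (card S - 1)"
proof (induction "card S" arbitrary: S rule: less_induct)
  case less
  have "\<exists>v\<in>S. deg E S v \<le> 1"
    using cycle_mindeg2[of E S, OF sym irr less.prems(1,2)] less.prems(3) by force
  then obtain v where v: "v \<in> S" "deg E S v \<le> 1" by blast
  show ?case
  proof (cases "S = {v}")
    case True
    then show ?thesis using irr by (simp add: deg_def)
  next
    case False
    define S' where "S' = S - {v}"
    have S'ne: "S' \<noteq> {}" using False v S'_def by auto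
    have fS': "finite S'" using less.prems S'_def by simp
    have cS': "card S' = card S - 1" using v less.prems S'_def by simp
    have "card S' \<noteq> 0" using S'ne fS' by simp
    then have cS2: "card S \<ge> 2" using cS' by linarith
    have "S' \<subseteq> S" using S'_def by blast
    then have nc: "\<not> has_cycle_in E S'" using less.prems(3) has_cycle_mono[of E S' S] by blast
    have IH: "(\<Sum>u\<in>S'. deg E S' u) \<le> 2 * (card S' - 1)"
      using less.hyps[of S'] cS' cS2 S'ne fS' nc by simp
    have split: "\<And>u. u \<in> S' \<Longrightarrow> deg E S u = deg E S' u + (if E u v then 1 else 0)"
    proof -
      fix u assume u: "u \<in> S'"
      show "deg E S u = deg E S' u + (if E u v then 1 else 0)"
      proof (cases "E u v")
        case True
        have "{w\<in>S. E u w} = insert v {w\<in>S'. E u w}" using True v S'_def by auto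
        then show ?thesis using True fS' S'_def by (simp add: deg_def)
      next
        case False
        have "{w\<in>S. E u w} = {w\<in>S'. E u w}" using False v S'_def by auto
        then show ?thesis using False by (simp add: deg_def)
      qed
    qed
    have "(\<Sum>u\<in>S'. (if E u v then 1 else 0::nat)) = card {u\<in>S'. E u v}"
      using fS' by (simp add: sum.If_cases Int_def)
    also have "{u\<in>S'. E u v} = {u\<in>S. E v u}" using sym irr S'_def by auto
    finally have s2: "(\<Sum>u\<in>S'. (if E u v then 1 else 0::nat)) = deg E S v" by (simp add: deg_def)
    have "(\<Sum>u\<in>S. deg E S u) = deg E S v + (\<Sum>u\<in>S'. deg E S u)"
      using v less.prems(1) S'_def by (simp add: sum.remove)
    also have "(\<Sum>u\<in>S'. deg E S u) = (\<Sum>u\<in>S'. deg E S' u) + deg E S v"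
      using split s2 by (simp add: sum.distrib)
    finally show ?thesis using IH v(2) cS' cS2 by simp
  qed
qed


locale G3 =
  fixes V :: "'a set" and E :: "'a \<Rightarrow> 'a \<Rightarrow> bool"
  assumes kc: "k_connected 3 V E"
begin

lemma finV: "finite V" using kc by (simp add: k_connected_def graph_def)
lemma Ein: "E u v \<Longrightarrow> u \<in> V \<and> v \<in> V" using kc by (simp add: k_connected_def graph_def)
lemma Esym: "E u v \<Longrightarrow> E v u" using kc by (simp add: k_connected_def graph_def)
lemma Eirr: "\<not> E u u" using kc by (auto simp: k_connected_def graph_def)
lemma cardV: "card V > 3" using kc by (simp add: k_connected_def)
lemma conn: "X \<subseteq> V \<Longrightarrow> card X < 3 \<Longrightarrow> connected_on E (V - X)"
  using kc by (simp add: k_connected_def)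

lemma mindeg: assumes v: "v \<in> V" shows "3 \<le> card {u. E v u}"
proof (rule ccontr)
  assume "\<not> ?thesis"
  then have c: "card {u. E v u} < 3" by simp
  define Nv where "Nv = {u. E v u}"
  have NV: "Nv \<subseteq> V" using Ein Nv_def by blast
  have fN: "finite Nv" using NV finV finite_subset by blast
  have co: "connected_on E (V - Nv)" using conn NV c Nv_def by simp
  have "card (V - Nv) \<ge> 2" using cardV c NV fN finV Nv_def by (simp add: card_Diff_subset)
  moreover have vin: "v \<in> V - Nv" using v Eirr Nv_def by simp
  ultimately obtain z where z: "z \<in> V - Nv" "z \<noteq> v"
  proof -
    have "\<not> (V - Nv \<subseteq> {v})"
    proof
      assume "V - Nv \<subseteq> {v}"
      then have "card (V - Nv) \<le> card {v}" by (intro card_mono) auto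
      then show False using \<open>card (V - Nv) \<ge> 2\<close> by simp
    qed
    then show ?thesis using that by blast
  qed
  have "(\<lambda>x y. x \<in> V - Nv \<and> y \<in> V - Nv \<and> E x y)\<^sup>*\<^sup>* v z"
    using co vin z by (simp add: connected_on_def)
  then show False
  proof (cases rule: converse_rtranclpE)
    case base then show False using z by simp
  next
    case (step y) then show False using Nv_def by simp
  qed
qed

lemma key:
  assumes XY: "X \<union> Y = V" and ns: "\<forall>u\<in>X-Y. \<forall>v\<in>Y-X. \<not> E u v"
    and c3: "card (X \<inter> Y) = 3" and Wne: "X - Y \<noteq> {}" and Yne: "Y - X \<noteq> {}"
    and nc: "\<not> has_cycle_in E X"
  shows "card (X - Y) = 1 \<and> (\<forall>u\<in>X\<inter>Y. \<forall>v\<in>X\<inter>Y. \<not> E u v)"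
proof -
  define W where "W = X - Y"
  define T where "T = X \<inter> Y"
  have fX: "finite X" using XY finV by (metis finite_Un)
  have fW: "finite W" "finite T" using fX W_def T_def by auto
  have XWT: "X = W \<union> T" "W \<inter> T = {}" using W_def T_def by auto
  have nbW: "\<And>w u. w \<in> W \<Longrightarrow> E w u \<Longrightarrow> u \<in> X"
  proof -
    fix w u assume w: "w \<in> W" and e: "E w u"
    show "u \<in> X"
    proof (rule ccontr)
      assume "u \<notin> X"
      then have "u \<in> Y - X" using Ein[OF e] XY by blast
      then show False using ns w e W_def by blast
    qed
  qed
  have dW: "\<And>w. w \<in> W \<Longrightarrow> 3 \<le> deg E X w"
  proof -
    fix w assume w: "w \<in> W"
    have "{u\<in>X. E w u} = {u. E w u}" using nbW[OF w] by blast
    then show "3 \<le> deg E X w" using mindeg[of w] w W_def XY by (auto simp: deg_def)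
  qed
  have tnb: "\<And>t. t \<in> T \<Longrightarrow> \<exists>w\<in>W. E t w"
  proof -
    fix t assume t: "t \<in> T"
    obtain w0 where w0: "w0 \<in> W" using Wne W_def by blast
    obtain z where z: "z \<in> Y - X" using Yne by blast
    have TV: "T - {t} \<subseteq> V" using XY T_def by blast
    have "card (T - {t}) = 2" using t c3 fW T_def by simp
    then have co: "connected_on E (V - (T - {t}))" using conn[OF TV] by simp
    define R where "R = (\<lambda>x y. x \<in> V - (T - {t}) \<and> y \<in> V - (T - {t}) \<and> E x y)"
    have w0V: "w0 \<in> V - (T - {t})" using w0 W_def T_def XY by blast
    have zV: "z \<in> V - (T - {t})" using z T_def XY by blast
    have "R\<^sup>*\<^sup>* w0 z" using co w0V zV by (simp add: connected_on_def R_def)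
    then have "z \<in> W \<or> (\<exists>w\<in>W. E t w)"
    proof (induction rule: rtranclp_induct)
      case base then show ?case using w0 by simp
    next
      case (step b c)
      show ?case
      proof (cases "\<exists>w\<in>W. E t w")
        case True then show ?thesis by simp
      next
        case False
        then have bW: "b \<in> W" using step.IH by simp
        have e: "E b c" and cV: "c \<in> V - (T - {t})" using step.hyps(2) R_def by auto
        have cX: "c \<in> X" using nbW[OF bW e] .
        show ?thesis
        proof (cases "c \<in> W")
          case True then show ?thesis by simp
        next
          case False
          then have "c \<in> T" using cX XWT by blast
          then have "c = t" using cV by blast
          then show ?thesis using bW e Esym by blast
        qed
      qed
    qed
    then show "\<exists>w\<in>W. E t w" using z W_def by blast
  qed
  have dT: "\<And>t. t \<in> T \<Longrightarrow> 1 \<le> deg E X t"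
  proof -
    fix t assume t: "t \<in> T"
    then obtain w where "w \<in> W" "E t w" using tnb by blast
    then have "w \<in> {u\<in>X. E t u}" using XWT by blast
    moreover have "finite {u\<in>X. E t u}" using fX by simp
    ultimately show "1 \<le> deg E X t" unfolding deg_def by (metis One_nat_def Suc_leI card_gt_0_iff empty_iff)
  qed
  have Xne: "X \<noteq> {}" using Wne by blast
  have s1: "\<And>u v. E u v \<Longrightarrow> E v u" by (rule Esym)
  have s2: "\<And>u. \<not> E u u" by (rule Eirr)
  have forest: "(\<Sum>v\<in>X. deg E X v) \<le> 2 * (card X - 1)"
    by (rule forest_degsum[of E, OF s1 s2 fX Xne nc])
  have "card (W \<union> T) = card W + card T" using XWT(2) fW by (rule card_Un_disjoint[rotated 2])
  have cT: "card T = 3" using c3 T_def by simp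
  have cX: "card X = card W + 3" using \<open>card (W \<union> T) = card W + card T\<close> cT
    by (subst XWT(1)) simp
  have "(\<Sum>v\<in>W \<union> T. deg E X v) = (\<Sum>v\<in>W. deg E X v) + (\<Sum>v\<in>T. deg E X v)"
    using XWT(2) fW by (simp add: sum.union_disjoint)
  then have sX: "(\<Sum>v\<in>X. deg E X v) = (\<Sum>v\<in>W. deg E X v) + (\<Sum>v\<in>T. deg E X v)"
    using XWT(1) by (simp only:)
  have sW: "3 * card W \<le> (\<Sum>v\<in>W. deg E X v)"
    using sum_bounded_below[of W 3 "deg E X"] dW by (simp add: mult.commute)
  have sT: "card T \<le> (\<Sum>v\<in>T. deg E X v)"
    using sum_bounded_below[of T 1 "deg E X"] dT by simp
  have "3 * card W + 3 \<le> 2 * (card W + 3 - 1)" using forest cX sX sW sT cT by linarith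
  then have cW1: "card W \<le> 1" by simp
  have cW0: "card W \<noteq> 0" using Wne fW W_def by simp
  have indep: "\<forall>u\<in>T. \<forall>v\<in>T. \<not> E u v"
  proof (intro ballI notI)
    fix t1 t2 assume t1: "t1 \<in> T" and t2: "t2 \<in> T" and e: "E t1 t2"
    have ne: "t1 \<noteq> t2" using e Eirr by blast
    have d2: "\<And>a b. a \<in> T \<Longrightarrow> b \<in> T \<Longrightarrow> E a b \<Longrightarrow> 2 \<le> deg E X a"
    proof -
      fix a b assume a: "a \<in> T" and b: "b \<in> T" and eab: "E a b"
      obtain w where w: "w \<in> W" "E a w" using tnb[OF a] by blast
      have "{w, b} \<subseteq> {u\<in>X. E a u}" using w b eab XWT by blast
      moreover have "w \<noteq> b" using w b XWT by blast
      ultimately have "card {w, b} \<le> card {u\<in>X. E a u}" using fX by (intro card_mono) auto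
      then show "2 \<le> deg E X a" using \<open>w \<noteq> b\<close> by (simp add: deg_def)
    qed
    have T2: "T = {t1, t2} \<union> (T - {t1, t2})" using t1 t2 by blast
    have "(\<Sum>v\<in>T. deg E X v) = (\<Sum>v\<in>{t1,t2}. deg E X v) + (\<Sum>v\<in>T - {t1,t2}. deg E X v)"
      using fW by (subst T2, subst sum.union_disjoint) auto
    moreover have "(\<Sum>v\<in>{t1,t2}. deg E X v) = deg E X t1 + deg E X t2" using ne by simp
    moreover have "deg E X t1 \<ge> 2" using d2[OF t1 t2 e] .
    moreover have "deg E X t2 \<ge> 2" using d2[OF t2 t1 Esym[OF e]] .
    moreover have "card (T - {t1,t2}) = 1" using c3 t1 t2 ne fW T_def by (simp add: card_Diff_subset)
    moreover have "card (T - {t1,t2}) \<le> (\<Sum>v\<in>T - {t1,t2}. deg E X v)"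
      using sum_bounded_below[of "T - {t1,t2}" 1 "deg E X"] dT by simp
    ultimately have "5 \<le> (\<Sum>v\<in>T. deg E X v)" by linarith
    then show False using forest cX sX sW cW0 by linarith
  qed
  show ?thesis using cW1 cW0 indep W_def T_def by simp
qed

end


locale M = G3 +
  fixes N :: "'a set set set" and \<sigma> :: "('a set \<times> 'a set) set"
  assumes mc: "maximal_three_chop V E N" and ss: "splitting_star N \<sigma>"
    and c5: "card (bag V \<sigma>) \<ge> 5"
begin

abbreviation "\<beta> \<equiv> bag V \<sigma>"
abbreviation "TE \<equiv> torso_edges V E \<sigma>"

lemma chop: "three_chop V E N" using mc by (simp add: maximal_three_chop_def)
lemma cfN: "claw_freeable V E N" using chop by (simp add: three_chop_def)
lemma nestN: "nested_set N" using chop by (simp add: three_chop_def)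
lemma Nprop: "s \<in> N \<Longrightarrow> proper_3sep V E s" using cfN by (simp add: claw_freeable_def)

lemma sig_orient: "(A, B) \<in> \<sigma> \<Longrightarrow> {A, B} \<in> N"
  using ss by (fastforce simp: splitting_star_def orientation_of_def)

lemma sig_sep:
  assumes "(A, B) \<in> \<sigma>"
  shows "A \<union> B = V \<and> (\<forall>u\<in>A-B. \<forall>v\<in>B-A. \<not> E u v) \<and> card (A \<inter> B) = 3"
proof -
  have "proper_3sep V E {A, B}" using Nprop sig_orient assms by blast
  then obtain A' B' where ab: "{A, B} = {A', B'}" and os: "oriented_sep V E (A', B')"
    and c: "card (A' \<inter> B') = 3" unfolding proper_3sep_def by blast
  from ab have "(A = A' \<and> B = B') \<or> (A = B' \<and> B = A')" by (simp add: doubleton_eq_iff)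
  then show ?thesis
  proof
    assume "A = A' \<and> B = B'" then show ?thesis using os c by (simp add: oriented_sep_def)
  next
    assume h: "A = B' \<and> B = A'"
    then show ?thesis using os c by (auto simp: oriented_sep_def Int_commute dest: Esym)
  qed
qed

lemma sig_le: "(A, B) \<in> \<sigma> \<Longrightarrow> (C, D) \<in> \<sigma> \<Longrightarrow> (A, B) \<noteq> (C, D) \<Longrightarrow> A \<subseteq> D \<and> C \<subseteq> B"
  using ss unfolding splitting_star_def is_star_def sep_le_def by fastforce

lemma bagV: "\<beta> \<subseteq> V" by (auto simp: bag_def)
lemma bagB: "(A, B) \<in> \<sigma> \<Longrightarrow> \<beta> \<subseteq> B" by (auto simp: bag_def)
lemma sepbag: assumes ab: "(A, B) \<in> \<sigma>" shows "A \<inter> B \<subseteq> \<beta>"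
proof
  fix x assume x: "x \<in> A \<inter> B"
  have "x \<in> V" using x sig_sep[OF ab] by blast
  moreover have "\<forall>CD\<in>\<sigma>. x \<in> snd CD"
  proof
    fix CD assume cd: "CD \<in> \<sigma>"
    obtain C D where CD: "CD = (C, D)" by (cases CD)
    show "x \<in> snd CD"
    proof (cases "(A, B) = (C, D)")
      case True then show ?thesis using x CD by simp
    next
      case False then show ?thesis using sig_le[OF ab] cd CD x by auto
    qed
  qed
  ultimately show "x \<in> \<beta>" by (simp add: bag_def)
qed

lemma region: "v \<in> V \<Longrightarrow> v \<notin> \<beta> \<Longrightarrow> \<exists>A B. (A, B) \<in> \<sigma> \<and> v \<in> A \<and> v \<notin> B"
proof -
  assume v: "v \<in> V" "v \<notin> \<beta>"
  then obtain AB where ab: "AB \<in> \<sigma>" "v \<notin> snd AB" by (auto simp: bag_def)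
  obtain A B where AB: "AB = (A, B)" by (cases AB)
  have ab1: "(A, B) \<in> \<sigma>" using ab AB by simp
  have "v \<notin> B" using ab AB by simp
  then have "v \<in> A" using sig_sep[OF ab1] v by blast
  then show ?thesis using ab AB by auto
qed

lemma region_uniq: "(A, B) \<in> \<sigma> \<Longrightarrow> (A2, B2) \<in> \<sigma> \<Longrightarrow> v \<in> A \<Longrightarrow> v \<notin> B \<Longrightarrow> v \<in> A2 \<Longrightarrow> v \<notin> B2
  \<Longrightarrow> A2 = A \<and> B2 = B"
  using sig_le[of A B A2 B2] by blast

lemma nreg: "v \<in> \<beta> \<Longrightarrow> (A, B) \<in> \<sigma> \<Longrightarrow> v \<in> B" using bagB by blast

lemma tgraph: "graph \<beta> TE"
  using finV bagV Esym by (auto simp: graph_def torso_edges_def intro: finite_subset)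

lemma tconn:
  assumes Y: "Y \<subseteq> \<beta>" and co: "connected_on E (V - Y)" and ne: "\<beta> - Y \<noteq> {}"
  shows "connected_on TE (\<beta> - Y)"
  unfolding connected_on_def
proof (intro conjI ballI)
  show "\<beta> - Y \<noteq> {}" by (rule ne)
  fix u v assume u: "u \<in> \<beta> - Y" and v: "v \<in> \<beta> - Y"
  define R where "R = (\<lambda>x y. x \<in> V - Y \<and> y \<in> V - Y \<and> E x y)"
  define RT where "RT = (\<lambda>x y. x \<in> \<beta> - Y \<and> y \<in> \<beta> - Y \<and> TE x y)"
  have uV: "u \<in> V - Y" "v \<in> V - Y" using u v bagV by auto
  have "R\<^sup>*\<^sup>* u v" using co uV by (simp add: connected_on_def R_def)
  then have "(v \<in> \<beta> \<longrightarrow> RT\<^sup>*\<^sup>* u v) \<and>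
     (\<forall>A B. (A, B) \<in> \<sigma> \<and> v \<in> A \<and> v \<notin> B \<longrightarrow> (\<exists>y\<in>A \<inter> B - Y. RT\<^sup>*\<^sup>* u y))"
  proof (induction rule: rtranclp_induct)
    case base
    then show ?case using u nreg by blast
  next
    case (step z z')
    have zV: "z \<in> V - Y" and z'V: "z' \<in> V - Y" and e: "E z z'" using step.hyps(2) R_def by auto
    have A1: "z' \<in> \<beta> \<longrightarrow> RT\<^sup>*\<^sup>* u z'"
    proof
      assume z'b: "z' \<in> \<beta>"
      show "RT\<^sup>*\<^sup>* u z'"
      proof (cases "z \<in> \<beta>")
        case True
        have "z \<noteq> z'" using e Eirr by blast
        then have "RT z z'" using True z'b zV z'V e by (simp add: RT_def torso_edges_def)
        then show ?thesis using step.IH True by (meson rtranclp.rtrancl_into_rtrancl)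
      next
        case False
        then obtain A B where ab: "(A, B) \<in> \<sigma>" "z \<in> A" "z \<notin> B" using region zV by blast
        then obtain y where y: "y \<in> A \<inter> B - Y" "RT\<^sup>*\<^sup>* u y" using step.IH by blast
        have z'A: "z' \<in> A"
        proof (rule ccontr)
          assume "z' \<notin> A"
          then have "z' \<in> B - A" using sig_sep[OF ab(1)] z'V by blast
          then show False using sig_sep[OF ab(1)] ab e by blast
        qed
        have z'B: "z' \<in> B" using nreg[OF z'b ab(1)] .
        show ?thesis
        proof (cases "y = z'")
          case True then show ?thesis using y by simp
        next
          case False
          have "y \<in> \<beta>" using y sepbag[OF ab(1)] by blast
          have ex: "\<exists>AB\<in>\<sigma>. y \<in> fst AB \<inter> snd AB \<and> z' \<in> fst AB \<inter> snd AB"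
            using y z'A z'B ab(1) by (intro bexI[of _ "(A, B)"]) auto
          then have "RT y z'" using False y \<open>y \<in> \<beta>\<close> z'b z'V
            by (simp add: RT_def torso_edges_def)
          then show ?thesis using y(2) by (meson rtranclp.rtrancl_into_rtrancl)
        qed
      qed
    qed
    have A2: "\<forall>A B. (A, B) \<in> \<sigma> \<and> z' \<in> A \<and> z' \<notin> B \<longrightarrow> (\<exists>y\<in>A \<inter> B - Y. RT\<^sup>*\<^sup>* u y)"
    proof (intro allI impI)
      fix A B assume h: "(A, B) \<in> \<sigma> \<and> z' \<in> A \<and> z' \<notin> B"
      have zA: "z \<in> A"
      proof (rule ccontr)
        assume "z \<notin> A"
        then have "z \<in> B - A" using sig_sep[of A B] h zV by blast
        then show False using sig_sep[of A B] h e Esym by blast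
      qed
      show "\<exists>y\<in>A \<inter> B - Y. RT\<^sup>*\<^sup>* u y"
      proof (cases "z \<in> \<beta>")
        case True
        then have "z \<in> B" using nreg h by blast
        then show ?thesis using True step.IH zA zV by blast
      next
        case False
        have "z \<notin> B"
        proof
          assume "z \<in> B"
          then have "z \<in> \<beta>" using sepbag[of A B] h zA by blast
          then show False using False by simp
        qed
        then show ?thesis using step.IH h zA by blast
      qed
    qed
    show ?case using A1 A2 by blast
  qed
  then show "RT\<^sup>*\<^sup>* u v" using v by blast
qed

lemma cardbag: "finite \<beta>" using finV bagV finite_subset by blast

lemma t3: "k_connected 3 \<beta> TE"
  unfolding k_connected_def
proof (intro conjI allI impI)
  show "graph \<beta> TE" by (rule tgraph)
  show "3 < card \<beta>" using c5 by simp
  fix Y assume Y: "Y \<subseteq> \<beta> \<and> card Y < 3"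
  have "connected_on E (V - Y)" using conn Y bagV by blast
  moreover have "\<beta> - Y \<noteq> {}"
  proof
    assume "\<beta> - Y = {}"
    then have "\<beta> \<subseteq> Y" by blast
    then have "card \<beta> \<le> card Y" using Y cardbag finite_subset by (metis card_mono)
    then show False using Y c5 by simp
  qed
  ultimately show "connected_on TE (\<beta> - Y)" using tconn Y by blast
qed

end


context M
begin

lemma tsep:
  assumes CD: "C \<union> D = \<beta>" and ns: "\<forall>u\<in>C-D. \<forall>v\<in>D-C. \<not> TE u v"
    and c3: "card (C \<inter> D) = 3" and Cne: "C - D \<noteq> {}" and Dne: "D - C \<noteq> {}"
  shows "(\<forall>u\<in>C \<inter> D. \<forall>v\<in>C \<inter> D. \<not> TE u v) \<and> (card (C - D) = 1 \<or> card (D - C) = 1)"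
proof -
  have clique: "\<And>A B. (A, B) \<in> \<sigma> \<Longrightarrow> A \<inter> B \<subseteq> C \<or> A \<inter> B \<subseteq> D"
  proof (rule ccontr)
    fix A B assume ab: "(A, B) \<in> \<sigma>" and h: "\<not> (A \<inter> B \<subseteq> C \<or> A \<inter> B \<subseteq> D)"
    then obtain u v where u: "u \<in> A \<inter> B" "u \<notin> C" and v: "v \<in> A \<inter> B" "v \<notin> D" by blast
    have ub: "u \<in> \<beta>" "v \<in> \<beta>" using u v sepbag[OF ab] by auto
    have "u \<in> D - C" "v \<in> C - D" using ub u v CD by auto
    then have "u \<noteq> v" by blast
    have "\<exists>AB\<in>\<sigma>. v \<in> fst AB \<inter> snd AB \<and> u \<in> fst AB \<inter> snd AB"
      using u v ab by (intro bexI[of _ "(A, B)"]) auto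
    then have "TE v u" using ub \<open>u \<noteq> v\<close> by (auto simp: torso_edges_def)
    then show False using ns \<open>u \<in> D - C\<close> \<open>v \<in> C - D\<close> by blast
  qed
  define C' where "C' = C \<union> {v\<in>V. \<exists>A B. (A, B) \<in> \<sigma> \<and> v \<in> A \<and> v \<notin> B \<and> A \<inter> B \<subseteq> C \<and> \<not> A \<inter> B \<subseteq> D}"
  define D' where "D' = D \<union> {v\<in>V. \<exists>A B. (A, B) \<in> \<sigma> \<and> v \<in> A \<and> v \<notin> B \<and> A \<inter> B \<subseteq> D}"
  have Cb: "C \<subseteq> \<beta>" "D \<subseteq> \<beta>" using CD by auto
  have regC: "\<And>A B v. (A, B) \<in> \<sigma> \<Longrightarrow> v \<in> A \<Longrightarrow> v \<notin> B \<Longrightarrow>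
      (v \<in> C' \<longleftrightarrow> A \<inter> B \<subseteq> C \<and> \<not> A \<inter> B \<subseteq> D) \<and> (v \<in> D' \<longleftrightarrow> A \<inter> B \<subseteq> D)"
  proof -
    fix A B v assume ab: "(A, B) \<in> \<sigma>" and v: "v \<in> A" "v \<notin> B"
    have vb: "v \<notin> \<beta>" using bagB[OF ab] v by blast
    have vV: "v \<in> V" using sig_sep[OF ab] v by blast
    have "v \<in> C' \<longleftrightarrow> (\<exists>A2 B2. (A2, B2) \<in> \<sigma> \<and> v \<in> A2 \<and> v \<notin> B2 \<and> A2 \<inter> B2 \<subseteq> C \<and> \<not> A2 \<inter> B2 \<subseteq> D)"
      using vb Cb vV unfolding C'_def by blast
    also have "\<dots> \<longleftrightarrow> A \<inter> B \<subseteq> C \<and> \<not> A \<inter> B \<subseteq> D"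
      using region_uniq[OF ab _ v] ab v by blast
    finally have 1: "v \<in> C' \<longleftrightarrow> A \<inter> B \<subseteq> C \<and> \<not> A \<inter> B \<subseteq> D" .
    have "v \<in> D' \<longleftrightarrow> (\<exists>A2 B2. (A2, B2) \<in> \<sigma> \<and> v \<in> A2 \<and> v \<notin> B2 \<and> A2 \<inter> B2 \<subseteq> D)"
      using vb Cb vV unfolding D'_def by blast
    also have "\<dots> \<longleftrightarrow> A \<inter> B \<subseteq> D"
      using region_uniq[OF ab _ v] ab v by blast
    finally show "(v \<in> C' \<longleftrightarrow> A \<inter> B \<subseteq> C \<and> \<not> A \<inter> B \<subseteq> D) \<and> (v \<in> D' \<longleftrightarrow> A \<inter> B \<subseteq> D)"
      using 1 by blast
  qed
  have bC: "\<And>v. v \<in> \<beta> \<Longrightarrow> (v \<in> C' \<longleftrightarrow> v \<in> C) \<and> (v \<in> D' \<longleftrightarrow> v \<in> D)"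
    using nreg by (auto simp: C'_def D'_def)
  have C'V: "C' \<subseteq> V" "D' \<subseteq> V" using Cb bagV by (auto simp: C'_def D'_def)
  have u1: "C' \<union> D' = V"
  proof
    show "C' \<union> D' \<subseteq> V" using C'V by blast
    show "V \<subseteq> C' \<union> D'"
    proof
      fix v assume vV: "v \<in> V"
      show "v \<in> C' \<union> D'"
      proof (cases "v \<in> \<beta>")
        case True then show ?thesis using CD bC by blast
      next
        case False
        then obtain A B where ab: "(A, B) \<in> \<sigma>" "v \<in> A" "v \<notin> B" using region vV by blast
        show ?thesis using regC[OF ab] clique[OF ab(1)] by blast
      qed
    qed
  qed
  have u2: "C' \<inter> D' = C \<inter> D"
  proof
    show "C \<inter> D \<subseteq> C' \<inter> D'" by (auto simp: C'_def D'_def)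
    show "C' \<inter> D' \<subseteq> C \<inter> D"
    proof
      fix v assume v: "v \<in> C' \<inter> D'"
      show "v \<in> C \<inter> D"
      proof (cases "v \<in> \<beta>")
        case True then show ?thesis using bC v by blast
      next
        case False
        then obtain A B where ab: "(A, B) \<in> \<sigma>" "v \<in> A" "v \<notin> B" using region v C'V by blast
        then show ?thesis using regC[OF ab] v by blast
      qed
    qed
  qed
  have u3: "\<forall>u\<in>C'-D'. \<forall>v\<in>D'-C'. \<not> E u v"
  proof (intro ballI notI)
    fix u v assume u: "u \<in> C' - D'" and v: "v \<in> D' - C'" and e: "E u v"
    have uV: "u \<in> V" and vV: "v \<in> V" using Ein[OF e] by auto
    show False
    proof (cases "u \<in> \<beta>")
      case ub: True
      show False
      proof (cases "v \<in> \<beta>")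
        case vb: True
        have "u \<in> C - D" "v \<in> D - C" using u v ub vb bC by auto
        moreover have "u \<noteq> v" using e Eirr by blast
        ultimately have "TE u v" using ub vb e by (simp add: torso_edges_def)
        then show False using ns \<open>u \<in> C - D\<close> \<open>v \<in> D - C\<close> by blast
      next
        case vb: False
        then obtain A B where ab: "(A, B) \<in> \<sigma>" "v \<in> A" "v \<notin> B" using region vV by blast
        have "u \<in> A"
        proof (rule ccontr)
          assume "u \<notin> A"
          then have "u \<in> B - A" using sig_sep[OF ab(1)] uV by blast
          then show False using sig_sep[OF ab(1)] ab e Esym by blast
        qed
        moreover have "u \<in> B" using nreg[OF ub ab(1)] .
        moreover have "A \<inter> B \<subseteq> D" using regC[OF ab] v by blast
        ultimately have "u \<in> D" by blast
        then show False using u bC ub by blast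
      qed
    next
      case ub: False
      then obtain A B where ab: "(A, B) \<in> \<sigma>" "u \<in> A" "u \<notin> B" using region uV by blast
      have vA: "v \<in> A"
      proof (rule ccontr)
        assume "v \<notin> A"
        then have "v \<in> B - A" using sig_sep[OF ab(1)] vV by blast
        then show False using sig_sep[OF ab(1)] ab e by blast
      qed
      have hC: "A \<inter> B \<subseteq> C" "\<not> A \<inter> B \<subseteq> D" using regC[OF ab] u by auto
      show False
      proof (cases "v \<in> B")
        case True
        then have "v \<in> C" using vA hC by blast
        then show False using v C'_def by blast
      next
        case False
        then show False using regC[OF ab(1) vA False] hC v by blast
      qed
    qed
  qed
  have CmD: "C - D \<subseteq> C' - D'" "D - C \<subseteq> D' - C'" using Cb bC by auto
  define s where "s = {C', D'}"
  have ps: "proper_3sep V E s"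
    unfolding proper_3sep_def s_def
    using u1 u2 u3 c3 CmD Cne Dne by (intro exI[of _ C'] exI[of _ D']) (auto simp: oriented_sep_def)
  have snN: "s \<notin> N"
  proof
    assume "s \<in> N"
    then obtain CD0 AB where o: "orientation_of CD0 s" and ab: "AB \<in> \<sigma>" and le: "sep_le CD0 AB"
      using ss by (auto simp: splitting_star_def)
    obtain A B where AB: "AB = (A, B)" by (cases AB)
    have abs: "(A, B) \<in> \<sigma>" using ab AB by simp
    have bB: "\<beta> \<subseteq> B" using bagB[OF abs] .
    have "CD0 = (C', D') \<or> CD0 = (D', C')" using o
      by (cases CD0) (auto simp: orientation_of_def s_def doubleton_eq_iff)
    then show False
    proof
      assume "CD0 = (C', D')"
      then have "B \<subseteq> D'" using le AB by (simp add: sep_le_def)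
      then show False using bB Cne Cb bC by blast
    next
      assume "CD0 = (D', C')"
      then have "B \<subseteq> C'" using le AB by (simp add: sep_le_def)
      then show False using bB Dne Cb bC by blast
    qed
  qed
  have nst: "\<And>t. t \<in> N \<Longrightarrow> nested s t \<and> nested t s"
  proof -
    fix t assume t: "t \<in> N"
    then obtain EF AB where o: "orientation_of EF t" and ab: "AB \<in> \<sigma>" and le: "sep_le EF AB"
      using ss by (auto simp: splitting_star_def)
    obtain A B where AB: "AB = (A, B)" by (cases AB)
    obtain E1 F1 where EF: "EF = (E1, F1)" by (cases EF)
    have abs: "(A, B) \<in> \<sigma>" using ab AB by simp
    have EA: "E1 \<subseteq> A" "B \<subseteq> F1" using le AB EF by (auto simp: sep_le_def)
    have o1: "orientation_of (E1, F1) t" "orientation_of (F1, E1) t" using o EF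
      by (auto simp: orientation_of_def)
    have os: "orientation_of (C', D') s" "orientation_of (D', C') s"
      by (auto simp: orientation_of_def s_def)
    show "nested s t \<and> nested t s"
    proof (cases "A \<inter> B \<subseteq> D")
      case True
      have AD: "A \<subseteq> D'"
      proof
        fix v assume v: "v \<in> A"
        show "v \<in> D'"
        proof (cases "v \<in> B")
          case True then show ?thesis using v \<open>A \<inter> B \<subseteq> D\<close> D'_def by blast
        next
          case False then show ?thesis using regC[OF abs v False] \<open>A \<inter> B \<subseteq> D\<close> by blast
        qed
      qed
      have CB: "C' \<subseteq> B"
      proof
        fix v assume v: "v \<in> C'"
        show "v \<in> B"
        proof (cases "v \<in> C")
          case True then show ?thesis using Cb bagB[OF abs] by blast
        next
          case False
          then obtain A2 B2 where ab2: "(A2, B2) \<in> \<sigma>" "v \<in> A2" "v \<notin> B2" "\<not> A2 \<inter> B2 \<subseteq> D"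
            using v C'_def by blast
          then have "(A2, B2) \<noteq> (A, B)" using \<open>A \<inter> B \<subseteq> D\<close> by blast
          then show ?thesis using sig_le[OF ab2(1) abs] ab2 by blast
        qed
      qed
      have "sep_le (C', D') (F1, E1)" using AD CB EA by (auto simp: sep_le_def)
      moreover have "sep_le (E1, F1) (D', C')" using AD CB EA by (auto simp: sep_le_def)
      ultimately show ?thesis using os o1 unfolding nested_def by blast
    next
      case False
      then have ABC: "A \<inter> B \<subseteq> C" using clique[OF abs] by blast
      have AC: "A \<subseteq> C'"
      proof
        fix v assume v: "v \<in> A"
        show "v \<in> C'"
        proof (cases "v \<in> B")
          case True then show ?thesis using v ABC C'_def by blast
        next
          case False then show ?thesis using regC[OF abs v False] ABC \<open>\<not> A \<inter> B \<subseteq> D\<close> by blast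
        qed
      qed
      have DB: "D' \<subseteq> B"
      proof
        fix v assume v: "v \<in> D'"
        show "v \<in> B"
        proof (cases "v \<in> D")
          case True then show ?thesis using Cb bagB[OF abs] by blast
        next
          case False
          then obtain A2 B2 where ab2: "(A2, B2) \<in> \<sigma>" "v \<in> A2" "v \<notin> B2" "A2 \<inter> B2 \<subseteq> D"
            using v D'_def by blast
          then have "(A2, B2) \<noteq> (A, B)" using \<open>\<not> A \<inter> B \<subseteq> D\<close> by blast
          then show ?thesis using sig_le[OF ab2(1) abs] ab2 by blast
        qed
      qed
      have "sep_le (D', C') (F1, E1)" using AC DB EA by (auto simp: sep_le_def)
      moreover have "sep_le (E1, F1) (C', D')" using AC DB EA by (auto simp: sep_le_def)
      ultimately show ?thesis using os o1 unfolding nested_def by blast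
    qed
  qed
  have nss: "nested s s" unfolding nested_def s_def orientation_of_def sep_le_def
    by (intro exI[of _ "(C', D')"]) auto
  have nsI: "nested_set (insert s N)"
    using nestN nst nss unfolding nested_set_def by blast
  have notcf: "\<not> claw_freeable V E (insert s N)"
  proof
    assume "claw_freeable V E (insert s N)"
    then have "three_chop V E (insert s N)" using nsI by (simp add: three_chop_def)
    moreover have "N \<subset> insert s N" using snN by blast
    ultimately show False using mc by (auto simp: maximal_three_chop_def)
  qed
  have sepS: "separator s = C \<inter> D" using u2 by (simp add: separator_def s_def)
  have cond: "\<not> claw_free_sep V E s \<and> (\<forall>t\<in>N. card (separator s \<inter> separator t) < 2)"
  proof (rule ccontr)
    assume h: "\<not> ?thesis"
    obtain xs where xs: "distinct xs" "set xs = N"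
      "\<forall>i < length xs. claw_free_sep V E (xs ! i) \<or>
           (\<exists>j < i. card (separator (xs ! i) \<inter> separator (xs ! j)) \<ge> 2)"
      using cfN by (auto simp: claw_freeable_def)
    have "claw_freeable V E (insert s N)"
      unfolding claw_freeable_def
    proof (intro conjI exI[of _ "xs @ [s]"] allI impI)
      show "\<forall>s'\<in>insert s N. proper_3sep V E s'" using ps Nprop by blast
      show "distinct (xs @ [s])" using xs snN by simp
      show "set (xs @ [s]) = insert s N" using xs by simp
      fix i assume i: "i < length (xs @ [s])"
      show "claw_free_sep V E ((xs @ [s]) ! i) \<or>
          (\<exists>j<i. 2 \<le> card (separator ((xs @ [s]) ! i) \<inter> separator ((xs @ [s]) ! j)))"
      proof (cases "i < length xs")
        case True
        then have "claw_free_sep V E (xs ! i) \<or>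
           (\<exists>j < i. card (separator (xs ! i) \<inter> separator (xs ! j)) \<ge> 2)" using xs(3) by blast
        moreover have eqi: "(xs @ [s]) ! i = xs ! i" using True by (simp add: nth_append)
        moreover have eqj: "\<And>j. j < i \<Longrightarrow> (xs @ [s]) ! j = xs ! j" using True by (simp add: nth_append)
        ultimately show ?thesis
        proof (elim disjE exE conjE)
          assume "claw_free_sep V E (xs ! i)"
          then show ?thesis using eqi by simp
        next
          fix j assume "j < i" "card (separator (xs ! i) \<inter> separator (xs ! j)) \<ge> 2"
          then show ?thesis using eqi eqj[of j] by (intro disjI2 exI[of _ j]) simp
        qed
      next
        case False
        then have ii: "i = length xs" using i by simp
        show ?thesis
        proof (cases "claw_free_sep V E s")
          case True then show ?thesis using ii by simp
        next
          case False
          then obtain t where t: "t \<in> N" "card (separator s \<inter> separator t) \<ge> 2" using h by auto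
          then obtain j where j: "j < length xs" "xs ! j = t" using xs(2) by (auto simp: in_set_conv_nth)
          show ?thesis using ii j t by (intro disjI2 exI[of _ j]) (simp add: nth_append)
        qed
      qed
    qed
    then show False using notcf by blast
  qed
  have cyc: "\<not> (has_cycle_in E C' \<and> has_cycle_in E D')"
    using cond ps unfolding claw_free_sep_def s_def by blast
  have c3': "card (C' \<inter> D') = 3" using u2 c3 by simp
  have c3'': "card (D' \<inter> C') = 3" using c3' by (simp add: Int_commute)
  have ne1: "C' - D' \<noteq> {}" using CmD Cne by blast
  have ne2: "D' - C' \<noteq> {}" using CmD Dne by blast
  have u1': "D' \<union> C' = V" using u1 by (simp add: Un_commute)
  have u3': "\<forall>u\<in>D'-C'. \<forall>v\<in>C'-D'. \<not> E u v" using u3 Esym by blast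
  have kC: "\<not> has_cycle_in E C' \<Longrightarrow> card (C' - D') = 1 \<and> (\<forall>u\<in>C' \<inter> D'. \<forall>v\<in>C' \<inter> D'. \<not> E u v)"
    by (rule key[OF u1 u3 c3' ne1 ne2])
  have kD: "\<not> has_cycle_in E D' \<Longrightarrow> card (D' - C') = 1 \<and> (\<forall>u\<in>D' \<inter> C'. \<forall>v\<in>D' \<inter> C'. \<not> E u v)"
    by (rule key[OF u1' u3' c3'' ne2 ne1])
  have DC: "D' \<inter> C' = C \<inter> D" using u2 by blast
  have indepE: "\<forall>u\<in>C \<inter> D. \<forall>v\<in>C \<inter> D. \<not> E u v"
  proof (cases "has_cycle_in E C'")
    case False
    then show ?thesis using kC u2 by simp
  next
    case True
    then have "\<not> has_cycle_in E D'" using cyc by blast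
    then show ?thesis using kD DC by simp
  qed
  have part1: "\<forall>u\<in>C \<inter> D. \<forall>v\<in>C \<inter> D. \<not> TE u v"
  proof (intro ballI notI)
    fix u v assume u: "u \<in> C \<inter> D" and v: "v \<in> C \<inter> D" and te: "TE u v"
    have ne: "u \<noteq> v" using te by (simp add: torso_edges_def)
    show False
    proof (cases "E u v")
      case True then show False using indepE u v by blast
    next
      case False
      then obtain AB where ab: "AB \<in> \<sigma>" "u \<in> fst AB \<inter> snd AB" "v \<in> fst AB \<inter> snd AB"
        using te by (auto simp: torso_edges_def)
      obtain A B where AB: "AB = (A, B)" by (cases AB)
      have abs: "(A, B) \<in> \<sigma>" using ab AB by simp
      have tN: "{A, B} \<in> N" using sig_orient[OF abs] .
      have st: "separator {A, B} = A \<inter> B" by (simp add: separator_def)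
      have "card (A \<inter> B) = 3" using sig_sep[OF abs] by blast
      then have fin: "finite (A \<inter> B)" by (intro card_ge_0_finite) simp
      have "{u, v} \<subseteq> separator s \<inter> separator {A, B}" using u v ab AB sepS st by auto
      then have "card {u, v} \<le> card (separator s \<inter> separator {A, B})"
        using fin st by (intro card_mono) auto
      then have "2 \<le> card (separator s \<inter> separator {A, B})" using ne by simp
      moreover have "card (separator s \<inter> separator {A, B}) < 2" using cond tN by blast
      ultimately show False by linarith
    qed
  qed
  have fC: "finite C'" "finite D'" using C'V finV finite_subset by auto
  have part2: "card (C - D) = 1 \<or> card (D - C) = 1"
  proof (cases "has_cycle_in E C'")
    case False
    then have "card (C' - D') = 1" using kC by simp
    then obtain x where "C' - D' = {x}" by (auto simp: card_Suc_eq)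
    then have "C - D \<subseteq> {x}" using CmD by blast
    then have "C - D = {x}" using Cne subset_singletonD by blast
    then show ?thesis by simp
  next
    case True
    then have "\<not> has_cycle_in E D'" using cyc by blast
    then have "card (D' - C') = 1" using kD by simp
    then obtain x where "D' - C' = {x}" by (auto simp: card_Suc_eq)
    then have "D - C \<subseteq> {x}" using CmD by blast
    then have "D - C = {x}" using Dne subset_singletonD by blast
    then show ?thesis by simp
  qed
  show ?thesis using part1 part2 by blast
qed

lemma final: "internally_4_connected \<beta> TE"
  unfolding internally_4_connected_def
proof (intro conjI allI impI)
  show "k_connected 3 \<beta> TE" by (rule t3)
  show "4 < card \<beta>" using c5 by simp
  fix A B assume h: "proper_3sep \<beta> TE {A, B} \<and> oriented_sep \<beta> TE (A, B)"
  then have AB: "A \<union> B = \<beta>" "\<forall>u\<in>A-B. \<forall>v\<in>B-A. \<not> TE u v" by (auto simp: oriented_sep_def)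
  obtain A' B' where ab: "{A, B} = {A', B'}" and c: "card (A' \<inter> B') = 3"
    and n1: "A' - B' \<noteq> {}" and n2: "B' - A' \<noteq> {}"
    using h unfolding proper_3sep_def by blast
  have "(A = A' \<and> B = B') \<or> (A = B' \<and> B = A')" using ab by (simp add: doubleton_eq_iff)
  then have "card (A \<inter> B) = 3 \<and> A - B \<noteq> {} \<and> B - A \<noteq> {}"
  proof
    assume "A = A' \<and> B = B'" then show ?thesis using c n1 n2 by simp
  next
    assume "A = B' \<and> B = A'" then show ?thesis using c n1 n2 by (simp add: Int_commute)
  qed
  then have r: "(\<forall>u\<in>A \<inter> B. \<forall>v\<in>A \<inter> B. \<not> TE u v) \<and> (card (A - B) = 1 \<or> card (B - A) = 1)"
    using tsep[OF AB] by blast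
  show "\<forall>u\<in>A \<inter> B. \<forall>v\<in>A \<inter> B. \<not> TE u v" using r by blast
  show "card (A - B) = 1 \<or> card (B - A) = 1" using r by blast
qed

end

theorem mainTheorem7:
  fixes V :: "'a set" and E :: "'a \<Rightarrow> 'a \<Rightarrow> bool"
    and N :: "'a set set set" and \<sigma> :: "('a set \<times> 'a set) set"
  assumes "k_connected 3 V E"
    and "\<not> is_K33 V E"
    and "maximal_three_chop V E N"
    and "splitting_star N \<sigma>"
    and "card (bag V \<sigma>) \<ge> 5"
  shows "internally_4_connected (bag V \<sigma>) (torso_edges V E \<sigma>)"
proof -
  interpret M V E N \<sigma>
    using assms by (unfold_locales) auto
  show ?thesis by (rule final)
qed


end
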